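(* There exists an edge-coloring of the complete graph on a countably infinite vertex set which contains a rainbow $k$-cycle for every integer $k \ge 3$ with $k \not\equiv 2 \pmod 4$, and contains no rainbow $k$-cycle for any $k \equiv 2 \pmod 4$. Moreover, for every $n$ there is a finite complete graph (an induced subgraph of this one, with the induced coloring) whose coloring contains a rainbow $k$-cycle for every $3 \le k \le n$ with $k \not\equiv 2 \pmod 4$, and contains no rainbow cycle of any length $\equiv 2 \pmod 4$.
   Context: A coloring is an arbitrary (not necessarily proper) assignment of colors, from an arbitrary set, to the edges of an undirected complete graph. A rainbow $k$-cycle is a cycle through $k$ distinct vertices whose $k$ edges all receive pairwise distinct colors. *)

theory Defs
  imports Main
begin

text \<open>An edge-colouring of the complete graph on vertex type 'v is a function
  from two-element vertex sets {u,w} to colours (values on other sets are irrelevant).\<close>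

definition rainbow_cycle :: "('v set \<Rightarrow> 'c) \<Rightarrow> 'v set \<Rightarrow> nat \<Rightarrow> bool" where
  "rainbow_cycle c V k \<longleftrightarrow> 3 \<le> k \<and>
     (\<exists>v :: nat \<Rightarrow> 'v. inj_on v {..<k} \<and> v ` {..<k} \<subseteq> V \<and>
        inj_on (\<lambda>i. c {v i, v (Suc i mod k)}) {..<k})"

end

theory Submission
  imports Defs
begin

definition col :: "nat set \<Rightarrow> nat" where
  "col S = (if \<exists>u\<in>S. \<exists>w\<in>S. (u+1) mod 4 = w mod 4
            then Suc (SOME w. w \<in> S \<and> (\<exists>u\<in>S. (u+1) mod 4 = w mod 4)) else 0)"

lemma lt4: "(x::nat) < 4 \<Longrightarrow> x = 0 \<or> x = 1 \<or> x = 2 \<or> x = 3" by auto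
lemma s1: "((a::nat)+1) mod 4 = (a mod 4 + 1) mod 4" by (simp add: mod_simps)
lemma s2: "even (a::nat) \<longleftrightarrow> even (a mod 4)"
  by (metis dvd_mod_iff even_numeral)
lemma s3: "even ((a::nat)+b) \<longleftrightarrow> even (a mod 4 + b mod 4)"
  by (metis s2 mod_add_eq)
lemma m4: "(a::nat) mod 4 < 4" by simp
lemma core_self: assumes r4: "r < 4" shows "(r+1) mod 4 \<noteq> (r::nat)"
  using lt4[OF r4] by (elim disjE) simp_all
lemma core_aux: assumes r4: "r < 4" and s4: "s < 4" and h: "(r+1) mod 4 = s" shows "(s+1) mod 4 \<noteq> (r::nat)"
  using lt4[OF r4] lt4[OF s4] h by (elim disjE) simp_all
lemma core0: assumes r4: "r < 4" and s4: "s < 4" and h: "(r+1) mod 4 \<noteq> s" "(s+1) mod 4 \<noteq> r" shows "even (r+s::nat)"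
  using lt4[OF r4] lt4[OF s4] h by (elim disjE) simp_all
lemma core1: assumes r4: "r < 4" and s4: "s < 4" and h: "(r+1) mod 4 = s \<or> (s+1) mod 4 = r" shows "odd (r+s::nat)"
  using lt4[OF r4] lt4[OF s4] h by (elim disjE) simp_all
lemma self4: "\<not> (x+1) mod 4 = (x::nat) mod 4"
  by (metis core_self s1 m4)
lemma aux4: "(u+1) mod 4 = w mod 4 \<Longrightarrow> \<not> (w+1) mod 4 = (u::nat) mod 4"
  by (metis core_aux s1 m4)
lemma par0: assumes h1: "\<not> (a+1) mod 4 = b mod 4" and h2: "\<not> (b+1) mod 4 = a mod 4" shows "even (a+b::nat)"
proof -
  have e1: "(a+1) mod 4 = (a mod 4 + 1) mod 4" by (rule s1)
  have e2: "(b+1) mod 4 = (b mod 4 + 1) mod 4" by (rule s1)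
  have g1: "(a mod 4 + 1) mod 4 \<noteq> b mod 4" using h1 e1 by argo
  have g2: "(b mod 4 + 1) mod 4 \<noteq> a mod 4" using h2 e2 by argo
  have "even (a mod 4 + b mod 4)" by (rule core0[OF m4 m4 g1 g2])
  then show ?thesis using s3[of a b] by blast
qed
lemma par1: "(a+1) mod 4 = b mod 4 \<or> (b+1) mod 4 = a mod 4 \<Longrightarrow> odd (a+b::nat)"
  by (metis core1 s1 s3 m4)
lemma core4k: assumes r4: "r < 4" and h: "r = (r + 2) mod (4::nat)" shows False
  using lt4[OF r4] h by (elim disjE) simp_all
lemma mod4k: "(s::nat) mod 4 = (s + k) mod 4 \<Longrightarrow> k mod 4 \<noteq> 2"
proof
  assume "s mod 4 = (s + k) mod 4" "k mod 4 = 2"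
  then have "s mod 4 = (s mod 4 + 2) mod 4" by (metis mod_add_eq)
  then show False using core4k[OF m4[of s]] by blast
qed
lemma oddk0: "odd (k::nat) \<Longrightarrow> k mod 4 \<noteq> 2" using s2 by fastforce
lemma oddk: "even (k - 1) \<Longrightarrow> 3 \<le> (k::nat) \<Longrightarrow> k mod 4 \<noteq> 2"
proof -
  assume "even (k - 1)" "3 \<le> k"
  then have "odd k" by (cases k) auto
  then show ?thesis by (rule oddk0)
qed
lemma closek1: "Suc i mod 4 \<noteq> 2 \<Longrightarrow> i mod 4 \<noteq> (1::nat)"
proof
  assume a: "Suc i mod 4 \<noteq> 2" "i mod 4 = 1"
  have "Suc i mod 4 = Suc (i mod 4) mod 4" by (simp only: mod_Suc_eq)
  also have "\<dots> = 2" using a(2) by simp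
  finally show False using a(1) by simp
qed

lemma col_fwd:
  assumes h: "(u+1) mod 4 = w mod 4"
  shows "col {u,w} = Suc w"
proof -
  have ex: "\<exists>u'\<in>{u,w}. \<exists>w'\<in>{u,w}. (u'+1) mod 4 = w' mod 4" using h by blast
  have "(SOME w'. w' \<in> {u,w} \<and> (\<exists>u'\<in>{u,w}. (u'+1) mod 4 = w' mod 4)) = w"
  proof (rule some_equality)
    show "w \<in> {u,w} \<and> (\<exists>u'\<in>{u,w}. (u'+1) mod 4 = w mod 4)" using h by blast
  next
    fix w' assume a: "w' \<in> {u,w} \<and> (\<exists>u'\<in>{u,w}. (u'+1) mod 4 = w' mod 4)"
    show "w' = w"
    proof (rule ccontr)
      assume "w' \<noteq> w"
      with a have wu: "w' = u" by blast
      with a have "(u+1) mod 4 = u mod 4 \<or> (w+1) mod 4 = u mod 4" by blast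
      with self4[of u] aux4[OF h] show False by blast
    qed
  qed
  then show ?thesis using ex by (simp add: col_def)
qed

lemma col_bwd:
  assumes h: "(w+1) mod 4 = u mod 4"
  shows "col {u,w} = Suc u"
  using col_fwd[OF h] by (simp add: insert_commute)

lemma col_zero:
  assumes "\<not> (u+1) mod 4 = w mod 4" "\<not> (w+1) mod 4 = u mod 4"
  shows "col {u,w} = 0"
proof -
  have "\<not> (\<exists>u'\<in>{u,w}. \<exists>w'\<in>{u,w}. (u'+1) mod 4 = w' mod 4)"
    using assms self4[of u] self4[of w] by blast
  then show ?thesis by (simp add: col_def)
qed

lemma sum_rot: "(\<Sum>i<Suc m. f (Suc i mod Suc m)) = (\<Sum>i<Suc m. (f i::nat))"
proof -
  have "(\<Sum>i<Suc m. f (Suc i mod Suc m)) = (\<Sum>i<m. f (Suc i mod Suc m)) + f (Suc m mod Suc m)"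
    by simp
  also have "(\<Sum>i<m. f (Suc i mod Suc m)) = (\<Sum>i<m. f (Suc i))" by (rule sum.cong) auto
  also have "(\<Sum>i<m. f (Suc i)) + f (Suc m mod Suc m) = f 0 + (\<Sum>i<m. f (Suc i))" by simp
  also have "\<dots> = (\<Sum>i<Suc m. f i)" by (rule sum.lessThan_Suc_shift[symmetric])
  finally show ?thesis .
qed

lemma sum_mod_cong: "(\<And>i. i \<in> A \<Longrightarrow> f i mod m = g i mod m) \<Longrightarrow> sum f A mod m = sum g A mod (m::nat)"
proof -
  assume h: "\<And>i. i \<in> A \<Longrightarrow> f i mod m = g i mod m"
  have "sum f A mod m = (\<Sum>i\<in>A. f i mod m) mod m" by (simp add: mod_sum_eq)
  also have "(\<Sum>i\<in>A. f i mod m) = (\<Sum>i\<in>A. g i mod m)" using h by (rule sum.cong[OF refl])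
  also have "(\<Sum>i\<in>A. g i mod m) mod m = sum g A mod m" by (simp add: mod_sum_eq)
  finally show ?thesis .
qed
lemma odd_sum_card: "finite A \<Longrightarrow> \<forall>x\<in>A. odd (f x :: nat) \<Longrightarrow> even (sum f A) = even (card A)"
  by (induction A rule: finite_induct) auto
lemma no_rb:
  assumes "rainbow_cycle col V k"
  shows "k mod 4 \<noteq> 2"
proof -
  from assms obtain v where k3: "3 \<le> k" and
    rb: "inj_on (\<lambda>i. col {v i, v (Suc i mod k)}) {..<k}"
    unfolding rainbow_cycle_def by blast
  define nx where "nx i = Suc i mod k" for i
  obtain m where km: "k = Suc m" using k3 by (cases k) auto
  have rot: "(\<Sum>i<k. v (nx i)) = (\<Sum>i<k. v i)" using sum_rot[where f=v and m=m] km nx_def by simp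
  define fw where "fw i \<longleftrightarrow> (v i + 1) mod 4 = v (nx i) mod 4" for i
  define bw where "bw i \<longleftrightarrow> (v (nx i) + 1) mod 4 = v i mod 4" for i
  have cfw: "col {v i, v (nx i)} = Suc (v (nx i))" if "fw i" for i
    using col_fwd that fw_def by simp
  have cbw: "col {v i, v (nx i)} = Suc (v i)" if "bw i" for i
    using col_bwd that bw_def by simp
  have c0: "col {v i, v (nx i)} = 0" if "\<not> fw i" "\<not> bw i" for i
    using col_zero that fw_def bw_def by simp
  have rb': "i = j" if "i<k" "j<k" "col {v i, v (nx i)} = col {v j, v (nx j)}" for i j
    using rb that by (auto simp: inj_on_def nx_def)
  show ?thesis
  proof (cases "\<exists>i<k. \<not>fw i \<and> \<not>bw i")
    case True
    then obtain i0 where i0: "i0<k" "\<not>fw i0" "\<not>bw i0" by blast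
    have others: "fw j \<or> bw j" if "j<k" "j\<noteq>i0" for j
    proof (rule ccontr)
      assume "\<not> (fw j \<or> bw j)"
      then have "col {v j, v (nx j)} = col {v i0, v (nx i0)}" using c0 i0 by simp
      then show False using rb'[OF that(1) i0(1)] that(2) by simp
    qed
    define g where "g i = v i + v (nx i)" for i
    have "sum g {..<k} = 2 * (\<Sum>i<k. v i)" using rot by (simp add: g_def sum.distrib)
    hence ev: "even (sum g {..<k})" by simp
    have split: "sum g {..<k} = g i0 + sum g ({..<k} - {i0})" using i0(1) by (simp add: sum.remove)
    have eg: "even (g i0)" using par0 i0(2,3) unfolding g_def fw_def bw_def by blast
    have og: "\<forall>j\<in>{..<k} - {i0}. odd (g j)"
    proof
      fix j assume "j \<in> {..<k} - {i0}"
      then have "fw j \<or> bw j" using others by auto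
      then show "odd (g j)" using par1 unfolding g_def fw_def bw_def by blast
    qed
    have "even (sum g ({..<k} - {i0}))" using ev eg split by simp
    then have "even (card ({..<k} - {i0}))" using odd_sum_card[OF _ og] by simp
    then have "even (k - 1)" using i0(1) by simp
    then show ?thesis using k3 oddk by blast
  next
    case False
    hence all: "fw i \<or> bw i" if "i<k" for i using that by blast
    have prp: "fw (Suc i)" if "fw i" "Suc i < k" for i
    proof (rule ccontr)
      assume "\<not> fw (Suc i)"
      then have "bw (Suc i)" using all that(2) by blast
      then have "col {v (Suc i), v (nx (Suc i))} = Suc (v (Suc i))" by (rule cbw)
      moreover have "col {v i, v (nx i)} = Suc (v (Suc i))" using cfw[OF that(1)] that(2) nx_def by simp
      ultimately show False using rb'[of i "Suc i"] that(2) by simp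
    qed
    have upto: "fw j \<Longrightarrow> j \<le> i \<Longrightarrow> i < k \<Longrightarrow> fw i" for i j
    proof (induction i)
      case 0 then show ?case by simp
    next
      case (Suc i)
      show ?case
      proof (cases "j \<le> i")
        case True then show ?thesis using Suc prp by simp
      next
        case False then have "j = Suc i" using Suc by simp
        then show ?thesis using Suc by simp
      qed
    qed
    have dir: "(\<forall>i<k. fw i) \<or> (\<forall>i<k. bw i)"
    proof (cases "fw 0")
      case True then show ?thesis using upto[of 0] by blast
    next
      case False
      have "0 < k" using k3 by simp
      then have b0: "bw 0" using all[of 0] False by blast
      have "bw i" if "i<k" for i
      proof (rule ccontr)
        assume "\<not> bw i"
        then have "fw i" using all that by blast
        then have "fw (k-1)" using upto[of i "k-1"] that by simp
        then have "col {v (k-1), v (nx (k-1))} = Suc (v (nx (k-1)))" by (rule cfw)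
        moreover have "nx (k-1) = 0" using km nx_def by simp
        ultimately have "col {v (k-1), v (nx (k-1))} = Suc (v 0)" by simp
        moreover have "col {v 0, v (nx 0)} = Suc (v 0)" using cbw[OF b0] .
        ultimately show False using rb'[of "k-1" 0] k3 by simp
      qed
      then show ?thesis by blast
    qed
    have sv: "(\<Sum>i<k. v i + 1) = (\<Sum>i<k. v i) + k" by (subst sum.distrib) simp
    from dir show ?thesis
    proof
      assume h: "\<forall>i<k. fw i"
      have "(\<Sum>i<k. v (nx i)) mod 4 = (\<Sum>i<k. v i + 1) mod 4"
        by (rule sum_mod_cong) (use h fw_def in auto)
      then have "(\<Sum>i<k. v i) mod 4 = ((\<Sum>i<k. v i) + k) mod 4" using rot sv by simp
      then show ?thesis by (rule mod4k)
    next
      assume h: "\<forall>i<k. bw i"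
      have "(\<Sum>i<k. v (nx i) + 1) mod 4 = (\<Sum>i<k. v i) mod 4"
        by (rule sum_mod_cong) (use h bw_def in auto)
      moreover have "(\<Sum>i<k. v (nx i) + 1) = (\<Sum>i<k. v i) + k" using rot by (subst sum.distrib) simp
      ultimately have "(\<Sum>i<k. v i) mod 4 = ((\<Sum>i<k. v i) + k) mod 4" by simp
      then show ?thesis by (rule mod4k)
    qed
  qed
qed

lemma rb_mono: "rainbow_cycle c V k \<Longrightarrow> V \<subseteq> W \<Longrightarrow> rainbow_cycle c W k"
  unfolding rainbow_cycle_def by blast

lemma rb_exists:
  assumes "3 \<le> k" "k mod 4 \<noteq> 2"
  shows "rainbow_cycle col {..<k} k"
proof -
  have f: "col {i, Suc i mod k} = (if i < k - 1 then i + 2 else if k mod 4 = 0 then 1 else 0)"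
    if "i < k" for i
  proof (cases "i < k - 1")
    case True
    then have "Suc i mod k = Suc i" by simp
    then show ?thesis using True col_fwd[of i "Suc i"] by simp
  next
    case False
    then have ik: "i = k - 1" using that by simp
    then have sm: "Suc i mod k = 0" using assms by simp
    show ?thesis
    proof (cases "k mod 4 = 0")
      case True
      have "(i+1) mod 4 = 0 mod 4" using True ik assms by simp
      then show ?thesis using col_fwd[of i 0] sm False True by simp
    next
      case F2: False
      have ks: "k = Suc i" using ik assms by simp
      have "\<not> (i+1) mod 4 = 0 mod 4" using F2 ks by simp
      moreover have "\<not> (0+1) mod 4 = i mod 4" using closek1[of i] assms(2) ks by simp
      ultimately have "\<not> (i+1) mod 4 = 0 mod 4" "\<not> (0+1) mod 4 = i mod 4" by auto
      then show ?thesis using col_zero[of i 0] sm False F2 by simp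
    qed
  qed
  have "inj_on (\<lambda>i. col {id i, id (Suc i mod k)}) {..<k}"
  proof (rule inj_onI)
    fix i j assume "i \<in> {..<k}" "j \<in> {..<k}" "col {id i, id (Suc i mod k)} = col {id j, id (Suc j mod k)}"
    then show "i = j" using f[of i] f[of j] by (auto split: if_splits)
  qed
  then show ?thesis unfolding rainbow_cycle_def using assms(1)
    by (intro conjI exI[of _ id]) auto
qed

theorem claim7:
  shows "\<exists>c :: nat set \<Rightarrow> nat.
    (\<forall>k. 3 \<le> k \<and> k mod 4 \<noteq> 2 \<longrightarrow> rainbow_cycle c UNIV k) \<and>
    (\<forall>k. k mod 4 = 2 \<longrightarrow> \<not> rainbow_cycle c UNIV k) \<and>
    (\<forall>n. \<exists>V :: nat set. finite V \<and>
        (\<forall>k. 3 \<le> k \<and> k \<le> n \<and> k mod 4 \<noteq> 2 \<longrightarrow> rainbow_cycle c V k) \<and>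
        (\<forall>k. k mod 4 = 2 \<longrightarrow> \<not> rainbow_cycle c V k))"
proof (intro exI[of _ col] conjI allI impI)
  fix k :: nat assume "3 \<le> k \<and> k mod 4 \<noteq> 2"
  then show "rainbow_cycle col UNIV k" using rb_exists rb_mono by blast
next
  fix k :: nat assume "k mod 4 = 2"
  then show "\<not> rainbow_cycle col UNIV k" using no_rb by blast
next
  fix n :: nat
  show "\<exists>V :: nat set. finite V \<and>
        (\<forall>k. 3 \<le> k \<and> k \<le> n \<and> k mod 4 \<noteq> 2 \<longrightarrow> rainbow_cycle col V k) \<and>
        (\<forall>k. k mod 4 = 2 \<longrightarrow> \<not> rainbow_cycle col V k)"
  proof (intro exI[of _ "{..<n}"] conjI allI impI)
    fix k :: nat assume h: "3 \<le> k \<and> k \<le> n \<and> k mod 4 \<noteq> 2"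
    then have "{..<k} \<subseteq> {..<n}" by auto
    then show "rainbow_cycle col {..<n} k" using rb_exists h rb_mono by blast
  next
    fix k :: nat assume "k mod 4 = 2"
    then show "\<not> rainbow_cycle col {..<n} k" using no_rb by blast
  qed simp
qed

end
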